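(* Let $P$ be a set of $n$ points in general position in the plane such that the number $m$ of points of $P$ on the boundary of its convex hull satisfies $m\geq 6$. If $P$ has a good-triangle, then $\mu(D(P))\geq\binom{n}{2}-9$.
   Context: General position means no three points collinear. Let $\mathcal{P}$ be the set of all closed segments with both endpoints in $P$, and let $v_1,\dots,v_m$ be the points of $P$ on the boundary of the convex hull of $P$, in clockwise cyclic order, indices taken mod $m$. For a point $x\in P$ not on the convex hull boundary and $i\in[m]$, the triangle $\triangle$ with sides $xv_i$, $xv_{i+1}$, $v_iv_{i+1}$ is a good-triangle of $P$ if (i) $x$ lies in the interior of the quadrilateral $v_iv_{i+1}v_{i+2}v_{i+m-1}$, and (ii) every segment $uv\in\mathcal{P}$ other than the three sides of $\triangle$ that intersects all three sides of $\triangle$ belongs to $\{v_iv_{i+2},v_iv_{i+3},v_{i+1}v_{i+m-2},v_{i+1}v_{i+m-1}\}$. $D(P)$ is the graph with vertex set $\mathcal{P}$, two segments adjacent iff disjoint. For a graph $G$ and $U\subseteq V(G)$, two distinct vertices $x,y\in U$ are $U$-mutually visible if $G$ contains a shortest $x$-$y$ path none of whose internal vertices lies in $U$; $U$ is a mutual-visibility set if every two distinct vertices of $U$ are $U$-mutually visible. $\mu(G)$ is the maximum size of a mutual-visibility set of $G$. *)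

theory Defs
  imports "HOL-Analysis.Analysis"
begin

type_synonym pt = "real \<times> real"

definition general_position :: "pt set \<Rightarrow> bool" where
  "general_position P \<longleftrightarrow>
     (\<forall>a\<in>P. \<forall>b\<in>P. \<forall>c\<in>P. a \<noteq> b \<and> a \<noteq> c \<and> b \<noteq> c \<longrightarrow> \<not> collinear {a, b, c})"

definition hull_pts :: "pt set \<Rightarrow> pt set" where
  "hull_pts P = P \<inter> frontier (convex hull P)"

definition cross :: "pt \<Rightarrow> pt \<Rightarrow> real" where
  "cross a b = fst a * snd b - snd a * fst b"

text \<open>v 0, ..., v (m-1) enumerate the hull points of P in clockwise cyclic order:
  every other point of P lies strictly to the right of each directed hull edge.\<close>
definition clockwise_hull_enum :: "pt set \<Rightarrow> nat \<Rightarrow> (nat \<Rightarrow> pt) \<Rightarrow> bool" where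
  "clockwise_hull_enum P m v \<longleftrightarrow>
     m = card (hull_pts P) \<and> bij_betw v {..<m} (hull_pts P) \<and>
     (\<forall>i<m. \<forall>p\<in>P. p \<noteq> v i \<and> p \<noteq> v (Suc i mod m) \<longrightarrow>
        cross (v (Suc i mod m) - v i) (p - v i) < 0)"

definition segs :: "pt set \<Rightarrow> pt set set" where
  "segs P = {closed_segment a b | a b. a \<in> P \<and> b \<in> P \<and> a \<noteq> b}"

definition good_triangle :: "pt set \<Rightarrow> nat \<Rightarrow> (nat \<Rightarrow> pt) \<Rightarrow> pt \<Rightarrow> nat \<Rightarrow> bool" where
  "good_triangle P m v x i \<longleftrightarrow>
     (let w = (\<lambda>j. v (j mod m)) in
       x \<in> P \<and> x \<notin> hull_pts P \<and> i < m \<and>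
       x \<in> interior (convex hull {w i, w (i+1), w (i+2), w (i+m-1)}) \<and>
       (\<forall>s\<in>segs P.
          s \<notin> {closed_segment x (w i), closed_segment x (w (i+1)), closed_segment (w i) (w (i+1))} \<and>
          s \<inter> closed_segment x (w i) \<noteq> {} \<and>
          s \<inter> closed_segment x (w (i+1)) \<noteq> {} \<and>
          s \<inter> closed_segment (w i) (w (i+1)) \<noteq> {} \<longrightarrow>
          s \<in> {closed_segment (w i) (w (i+2)), closed_segment (w i) (w (i+3)),
                closed_segment (w (i+1)) (w (i+m-2)), closed_segment (w (i+1)) (w (i+m-1))}))"

definition has_good_triangle :: "pt set \<Rightarrow> bool" where
  "has_good_triangle P \<longleftrightarrow>
     (\<exists>v. clockwise_hull_enum P (card (hull_pts P)) v \<and>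
        (\<exists>x i. good_triangle P (card (hull_pts P)) v x i))"

definition is_walk :: "'a set \<Rightarrow> ('a \<Rightarrow> 'a \<Rightarrow> bool) \<Rightarrow> 'a list \<Rightarrow> 'a \<Rightarrow> 'a \<Rightarrow> bool" where
  "is_walk V E xs x y \<longleftrightarrow> xs \<noteq> [] \<and> hd xs = x \<and> last xs = y \<and> set xs \<subseteq> V \<and>
     (\<forall>i. Suc i < length xs \<longrightarrow> E (xs ! i) (xs ! Suc i))"

definition is_shortest_path :: "'a set \<Rightarrow> ('a \<Rightarrow> 'a \<Rightarrow> bool) \<Rightarrow> 'a list \<Rightarrow> 'a \<Rightarrow> 'a \<Rightarrow> bool" where
  "is_shortest_path V E xs x y \<longleftrightarrow> is_walk V E xs x y \<and>
     (\<forall>ys. is_walk V E ys x y \<longrightarrow> length xs \<le> length ys)"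

definition mutually_visible :: "'a set \<Rightarrow> ('a \<Rightarrow> 'a \<Rightarrow> bool) \<Rightarrow> 'a set \<Rightarrow> 'a \<Rightarrow> 'a \<Rightarrow> bool" where
  "mutually_visible V E U x y \<longleftrightarrow>
     (\<exists>xs. is_shortest_path V E xs x y \<and>
        (\<forall>i. 0 < i \<and> Suc i < length xs \<longrightarrow> xs ! i \<notin> U))"

definition mv_set :: "'a set \<Rightarrow> ('a \<Rightarrow> 'a \<Rightarrow> bool) \<Rightarrow> 'a set \<Rightarrow> bool" where
  "mv_set V E U \<longleftrightarrow> U \<subseteq> V \<and>
     (\<forall>x\<in>U. \<forall>y\<in>U. x \<noteq> y \<longrightarrow> mutually_visible V E U x y)"

definition mu :: "'a set \<Rightarrow> ('a \<Rightarrow> 'a \<Rightarrow> bool) \<Rightarrow> nat" where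
  "mu V E = Max {card U | U. mv_set V E U}"

definition D_adj :: "pt set \<Rightarrow> pt set \<Rightarrow> bool" where
  "D_adj s t \<longleftrightarrow> s \<inter> t = {}"

end

theory Submission
  imports Defs
begin

definition ori :: "pt \<Rightarrow> pt \<Rightarrow> pt \<Rightarrow> real" where
  "ori p q r = cross (q - p) (r - p)"
lemma ori_bary:
  "ori a b c * ori p q z = ori z b c * ori p q a + ori a z c * ori p q b + ori a b z * ori p q c"
  unfolding ori_def cross_def by (simp add: fst_diff snd_diff; algebra)
lemma ori_trans_id:
  "ori o' a c * ori o' w b = ori o' a b * ori o' w c + ori o' b c * ori o' w a"
  unfolding ori_def cross_def by (simp add: fst_diff snd_diff; algebra)
lemma ori_cyc: "ori p q r = ori q r p"
  unfolding ori_def cross_def by (simp add: fst_diff snd_diff; algebra)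
lemma ori_swap: "ori p r q = - ori p q r"
  unfolding ori_def cross_def by (simp add: fst_diff snd_diff; algebra)
lemma ori_affine: "ori c d ((1 - u) *\<^sub>R p + u *\<^sub>R q) = (1 - u) * ori c d p + u * ori c d q"
  unfolding ori_def cross_def by (simp add: fst_diff snd_diff; algebra)

lemma par_aux:
  fixes a1 a2 b1 b2 :: real
  assumes "a1 * b2 = a2 * b1" "a1^2 + a2^2 \<noteq> 0"
  shows "b1 = ((a1 * b1 + a2 * b2)/(a1^2+a2^2)) * a1" "b2 = ((a1 * b1 + a2 * b2)/(a1^2+a2^2)) * a2"
proof -
  have "b1 * (a1^2+a2^2) = (a1 * b1 + a2 * b2) * a1"
    using assms(1) unfolding power2_eq_square by algebra
  then show "b1 = ((a1 * b1 + a2 * b2)/(a1^2+a2^2)) * a1" using assms(2)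
    by (simp add: field_simps)
  have "b2 * (a1^2+a2^2) = (a1 * b1 + a2 * b2) * a2"
    using assms(1) unfolding power2_eq_square by algebra
  then show "b2 = ((a1 * b1 + a2 * b2)/(a1^2+a2^2)) * a2" using assms(2)
    by (simp add: field_simps)
qed

lemma ori_zero_collinear:
  assumes "ori a b c = 0" shows "collinear {a, b, c}"
proof (cases "b = a")
  case True then show ?thesis by (simp add: collinear_2)
next
  case False
  have "collinear {0, b - a, c - a}"
  proof -
    let ?u = "b - a" and ?v = "c - a"
    have u0: "?u \<noteq> 0" using False by simp
    have cr: "fst ?u * snd ?v = snd ?u * fst ?v" using assms by (simp add: ori_def cross_def)
    have nz: "fst ?u ^ 2 + snd ?u ^ 2 \<noteq> 0"
      using u0 by (simp add: prod_eq_iff sum_power2_eq_zero_iff)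
    note pa = par_aux[OF cr nz]
    have "?v = ((fst ?u * fst ?v + snd ?u * snd ?v)/(fst ?u^2+snd ?u^2)) *\<^sub>R ?u"
      apply (rule prod_eqI)
      subgoal using pa(1) by (simp only: fst_scaleR real_scaleR_def)
      subgoal using pa(2) by (simp only: snd_scaleR real_scaleR_def)
      done
    then show ?thesis unfolding collinear_lemma by blast
  qed
  then have "collinear {b, a, c}" by (subst collinear_3) simp_all
  then show ?thesis by (simp add: insert_commute)
qed

lemma ori_self [simp]: "ori p q p = 0" "ori p q q = 0" "ori p p q = 0"
  unfolding ori_def cross_def by (simp_all add: fst_diff snd_diff)

lemma in_seg_ori:
  assumes "z \<in> closed_segment p q"
  shows "\<exists>u. 0 \<le> u \<and> u \<le> 1 \<and> (\<forall>c d. ori c d z = (1 - u) * ori c d p + u * ori c d q)"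
  using assms unfolding closed_segment_def by (auto simp: ori_affine)

lemma conv_pos: "(0::real) < a \<Longrightarrow> 0 < b \<Longrightarrow> 0 \<le> u \<Longrightarrow> u \<le> 1 \<Longrightarrow> 0 < (1 - u) * a + u * b"
  by (cases "u = 0") (auto intro: add_nonneg_pos add_pos_nonneg)

lemma conv_nonpos: "(a::real) \<le> 0 \<Longrightarrow> b \<le> 0 \<Longrightarrow> 0 \<le> u \<Longrightarrow> u \<le> 1 \<Longrightarrow> (1 - u) * a + u * b \<le> 0"
  by (simp add: add_nonpos_nonpos mult_nonneg_nonpos)

lemma seg_sep:
  assumes "ori c d p > 0" "ori c d q > 0" "ori c d r1 \<le> 0" "ori c d r2 \<le> 0"
  shows "closed_segment p q \<inter> closed_segment r1 r2 = {}"
proof (rule ccontr)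
  assume "closed_segment p q \<inter> closed_segment r1 r2 \<noteq> {}"
  then obtain z where z1: "z \<in> closed_segment p q" and z2: "z \<in> closed_segment r1 r2" by blast
  from in_seg_ori[OF z1] obtain u where u: "0 \<le> u" "u \<le> 1" "ori c d z = (1 - u) * ori c d p + u * ori c d q" by blast
  from in_seg_ori[OF z2] obtain v where v: "0 \<le> v" "v \<le> 1" "ori c d z = (1 - v) * ori c d r1 + v * ori c d r2" by blast
  have "ori c d z > 0" using u assms conv_pos by simp
  moreover have "ori c d z \<le> 0" using v assms conv_nonpos by simp
  ultimately show False by simp
qed

lemma seg_sep':
  assumes "ori c d p < 0" "ori c d q < 0" "ori c d r1 \<ge> 0" "ori c d r2 \<ge> 0"
  shows "closed_segment p q \<inter> closed_segment r1 r2 = {}"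
proof -
  have e: "ori d c z = - ori c d z" for z by (metis ori_cyc ori_swap)
  show ?thesis by (rule seg_sep[of d c]) (use assms e in auto)
qed

lemma cross_id:
  "ori r1 r2 p *\<^sub>R q - ori r1 r2 q *\<^sub>R p = ori p q r2 *\<^sub>R r1 - ori p q r1 *\<^sub>R r2"
  unfolding ori_def cross_def by (simp add: prod_eq_iff fst_diff snd_diff; algebra)

lemma cross_id2: "ori r1 r2 p - ori r1 r2 q = ori p q r2 - ori p q r1"
  unfolding ori_def cross_def by (simp add: fst_diff snd_diff; algebra)

lemma frac01:
  fixes a b :: real assumes "a * b < 0"
  shows "0 \<le> a / (a - b)" "a / (a - b) \<le> 1" "1 - a/(a-b) = - b / (a - b)"
proof -
  have "(a > 0 \<and> b < 0) \<or> (a < 0 \<and> b > 0)" using assms by (auto simp: mult_less_0_iff)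
  then show "0 \<le> a / (a - b)" "a / (a - b) \<le> 1"
    by (auto simp: divide_simps)
  have "a - b \<noteq> 0" using assms by auto
  then show "1 - a/(a-b) = - b / (a - b)" by (simp add: field_simps)
qed

lemma seg_cross:
  assumes "ori p q r1 * ori p q r2 < 0" "ori r1 r2 p * ori r1 r2 q < 0"
  shows "closed_segment p q \<inter> closed_segment r1 r2 \<noteq> {}"
proof -
  define al where "al = ori r1 r2 p"
  define be where "be = ori r1 r2 q"
  define ga where "ga = ori p q r1"
  define de where "de = ori p q r2"
  have D: "al - be = de - ga" unfolding al_def be_def ga_def de_def by (rule cross_id2)
  have D0: "al - be \<noteq> 0" using assms(2) unfolding al_def be_def by auto
  define z where "z = (1 / (al - be)) *\<^sub>R (al *\<^sub>R q - be *\<^sub>R p)"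
  have z1: "z = (1 - al/(al-be)) *\<^sub>R p + (al/(al-be)) *\<^sub>R q"
    unfolding z_def frac01(3)[OF assms(2)[folded al_def be_def]]
    by (simp add: scaleR_diff_right divide_inverse algebra_simps)
  have z2': "z = (1 / (de - ga)) *\<^sub>R (de *\<^sub>R r1 - ga *\<^sub>R r2)"
    unfolding z_def D[symmetric] using cross_id[of r1 r2 p q] unfolding al_def be_def ga_def de_def by simp
  have gd: "ga * de < 0" using assms(1) unfolding ga_def de_def .
  have z2: "z = (1 - ga/(ga-de)) *\<^sub>R r1 + (ga/(ga-de)) *\<^sub>R r2"
  proof -
    have "ga - de \<noteq> 0" using gd by auto
    then have "1 - ga/(ga-de) = de / (de - ga)" "ga/(ga-de) = - ga / (de - ga)"
      by (simp_all add: field_simps)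
    then show ?thesis unfolding z2' by (simp add: scaleR_diff_right divide_inverse algebra_simps)
  qed
  have "z \<in> closed_segment p q" unfolding closed_segment_def z1
    using frac01(1,2)[OF assms(2)[folded al_def be_def]] by blast
  moreover have "z \<in> closed_segment r1 r2" unfolding closed_segment_def z2
    using frac01(1,2)[OF gd] by blast
  ultimately show ?thesis by blast
qed

lemma ori_perm:
  "ori q r p = ori p q r" "ori r p q = ori p q r" "ori p r q = - ori p q r"
  "ori q p r = - ori p q r" "ori r q p = - ori p q r"
  by (metis ori_cyc ori_swap)+

lemma ori_all:
  fixes p q r :: pt
  shows "ori q r p = ori p q r" "ori r p q = ori p q r" "ori p r q = - ori p q r"
  "ori q p r = - ori p q r" "ori r q p = - ori p q r"
  by (rule ori_perm)+

lemma ori_lin: "u + v = 1 \<Longrightarrow> ori c d (u *\<^sub>R a + v *\<^sub>R b) = u * ori c d a + v * ori c d b"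
  unfolding ori_def cross_def by (simp add: fst_diff snd_diff; algebra)

lemma convex_ori: "convex {z. 0 \<le> ori c d z}"
  unfolding convex_def by (auto simp: ori_lin)

lemma hull_ori:
  assumes "z \<in> convex hull S" "\<forall>y\<in>S. 0 \<le> ori c d y"
  shows "0 \<le> ori c d z"
proof -
  have "convex hull S \<subseteq> {z. 0 \<le> ori c d z}"
    by (rule hull_minimal) (use assms(2) convex_ori in auto)
  then show ?thesis using assms(1) by auto
qed

lemma sgn_neg: "(X::real) * Y = S \<Longrightarrow> Y < 0 \<Longrightarrow> 0 < S \<Longrightarrow> X < 0"
proof (rule ccontr)
  assume "X * Y = S" "Y < 0" "0 < S" "\<not> X < 0"
  then have "X * Y \<le> 0" using mult_nonneg_nonpos[of X Y] by simp
  then show False using \<open>X * Y = S\<close> \<open>0 < S\<close> by simp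
qed
lemma sgn_pos: "(X::real) * Y = S \<Longrightarrow> Y < 0 \<Longrightarrow> S < 0 \<Longrightarrow> 0 < X"
proof (rule ccontr)
  assume "X * Y = S" "Y < 0" "S < 0" "\<not> 0 < X"
  then have "0 \<le> X * Y" using mult_nonpos_nonpos[of X Y] by simp
  then show False using \<open>X * Y = S\<close> \<open>S < 0\<close> by simp
qed
lemma sgn_neg2: "(X::real) * Y = S \<Longrightarrow> 0 < Y \<Longrightarrow> 0 < S \<Longrightarrow> 0 < X"
proof (rule ccontr)
  assume "X * Y = S" "0 < Y" "0 < S" "\<not> 0 < X"
  then have "X * Y \<le> 0" using mult_nonpos_nonneg[of X Y] by simp
  then show False using \<open>X * Y = S\<close> \<open>0 < S\<close> by simp
qed

locale cfg =
  fixes P :: "pt set" and m :: nat and W :: "nat \<Rightarrow> pt" and x :: pt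
  assumes gp: "general_position P"
  and m6: "6 \<le> m"
  and WP: "\<And>k. k < m \<Longrightarrow> W k \<in> P"
  and Winj: "\<And>a b. a < m \<Longrightarrow> b < m \<Longrightarrow> W a = W b \<Longrightarrow> a = b"
  and edge: "\<And>k p. Suc k < m \<Longrightarrow> p \<in> P \<Longrightarrow> p \<noteq> W k \<Longrightarrow> p \<noteq> W (Suc k) \<Longrightarrow> ori (W k) (W (Suc k)) p < 0"
  and edge_last: "\<And>p. p \<in> P \<Longrightarrow> p \<noteq> W (m-1) \<Longrightarrow> p \<noteq> W 0 \<Longrightarrow> ori (W (m-1)) (W 0) p < 0"
  and xP: "x \<in> P" and xW: "\<And>k. k < m \<Longrightarrow> x \<noteq> W k"
  and xhull: "x \<in> convex hull {W 0, W 1, W 2, W (m-1)}"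
  and G: "\<And>s. s \<in> segs P \<Longrightarrow> s \<notin> {closed_segment x (W 0), closed_segment x (W 1), closed_segment (W 0) (W 1)}
     \<Longrightarrow> s \<inter> closed_segment x (W 0) \<noteq> {} \<Longrightarrow> s \<inter> closed_segment x (W 1) \<noteq> {} \<Longrightarrow> s \<inter> closed_segment (W 0) (W 1) \<noteq> {}
     \<Longrightarrow> s \<in> {closed_segment (W 0) (W 2), closed_segment (W 0) (W 3), closed_segment (W 1) (W (m-2)), closed_segment (W 1) (W (m-1))}"
begin

lemma gp_ori: "a \<in> P \<Longrightarrow> b \<in> P \<Longrightarrow> c \<in> P \<Longrightarrow> a \<noteq> b \<Longrightarrow> a \<noteq> c \<Longrightarrow> b \<noteq> c \<Longrightarrow> ori a b c \<noteq> 0"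
  using gp ori_zero_collinear unfolding general_position_def by blast

lemma Wne: "a < m \<Longrightarrow> b < m \<Longrightarrow> a \<noteq> b \<Longrightarrow> W a \<noteq> W b"
  using Winj by blast

lemma tri_lt: assumes "a < b" "b < c" "c < m" shows "ori (W a) (W b) (W c) < 0"
proof (cases "b = Suc a")
  case True
  then show ?thesis using edge[of a "W c"] assms WP Wne by simp
next
  case False
  then have ab: "Suc a < b" using assms by simp
  have wneg: "ori (W a) (W (Suc a)) (W k) < 0" if "Suc a < k" "k < m" for k
    using edge[of a "W k"] that WP Wne by simp
  show ?thesis using assms(2,3)
  proof (induction c rule: less_induct)
    case (less c)
    show ?case
    proof (cases "c = Suc b")
      case True
      then show ?thesis using edge[of b "W a"] less.prems assms WP Wne ori_perm(1)[of "W b" "W c" "W a"] by simp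
    next
      case False
      define c' where "c' = c - 1"
      have c': "c = Suc c'" "b < c'" using less.prems False unfolding c'_def by auto
      have ih: "ori (W a) (W b) (W c') < 0" using less.IH[of c'] c' less.prems by simp
      have e: "ori (W a) (W c') (W c) < 0"
        using edge[of c' "W a"] less.prems c' assms WP Wne ori_perm(1)[of "W c'" "W c" "W a"] by simp
      have id: "ori (W a) (W b) (W c) * ori (W a) (W (Suc a)) (W c') =
        ori (W a) (W b) (W c') * ori (W a) (W (Suc a)) (W c) + ori (W a) (W c') (W c) * ori (W a) (W (Suc a)) (W b)"
        by (rule ori_trans_id)
      have "0 < ori (W a) (W b) (W c') * ori (W a) (W (Suc a)) (W c) + ori (W a) (W c') (W c) * ori (W a) (W (Suc a)) (W b)"
        using ih e wneg[of c] wneg[of b] ab c' less.prems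
        by (intro add_pos_pos mult_neg_neg) auto
      then show ?thesis using sgn_neg[OF id] wneg[of c'] ab c' less.prems by auto
    qed
  qed
qed

lemma tri_all: assumes "a < b" "b < c" "c < m"
  shows "ori (W a) (W b) (W c) < 0" "ori (W b) (W c) (W a) < 0" "ori (W c) (W a) (W b) < 0"
        "ori (W a) (W c) (W b) > 0" "ori (W b) (W a) (W c) > 0" "ori (W c) (W b) (W a) > 0"
  using tri_lt[OF assms] ori_perm[of "W a" "W b" "W c"] by simp_all

end

context cfg begin

lemma m_facts: "0 < m" "1 < m" "2 < m" "3 < m" "m - 2 < m" "m - 1 < m" "3 < m - 2" "m - 2 < m - 1"
  "Suc (m - 2) = m - 1" "Suc 0 < m - 2" "m - 2 < m - Suc 0"
  using m6 by auto

lemma inP: "W 0 \<in> P" "W 1 \<in> P" "W 2 \<in> P" "W 3 \<in> P" "W (m-2) \<in> P" "W (m-1) \<in> P" "x \<in> P"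
  using WP m_facts xP by auto

lemma dist: "W 0 \<noteq> W 1" "W 0 \<noteq> W 2" "W 0 \<noteq> W 3" "W 0 \<noteq> W (m-2)" "W 0 \<noteq> W (m-1)"
  "W 1 \<noteq> W 2" "W 1 \<noteq> W 3" "W 1 \<noteq> W (m-2)" "W 1 \<noteq> W (m-1)"
  "W 2 \<noteq> W 3" "W 2 \<noteq> W (m-2)" "W 2 \<noteq> W (m-1)" "W 3 \<noteq> W (m-2)" "W 3 \<noteq> W (m-1)"
  "W (m-2) \<noteq> W (m-1)"
  "x \<noteq> W 0" "x \<noteq> W 1" "x \<noteq> W 2" "x \<noteq> W 3" "x \<noteq> W (m-2)" "x \<noteq> W (m-1)"
  using m6 by - (rule Wne xW; simp)+

lemmas dist' = dist dist[symmetric]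

lemma edge01: "p \<in> P \<Longrightarrow> p \<noteq> W 0 \<Longrightarrow> p \<noteq> W 1 \<Longrightarrow> ori (W 0) (W 1) p < 0"
  using edge[of 0 p] m_facts by simp
lemma edge12: "p \<in> P \<Longrightarrow> p \<noteq> W 1 \<Longrightarrow> p \<noteq> W 2 \<Longrightarrow> ori (W 1) (W 2) p < 0"
  using edge[of 1 p] m_facts by (simp add: numeral_2_eq_2)
lemma edge23: "p \<in> P \<Longrightarrow> p \<noteq> W 2 \<Longrightarrow> p \<noteq> W 3 \<Longrightarrow> ori (W 2) (W 3) p < 0"
  using edge[of 2 p] m_facts by (simp add: numeral_3_eq_3 numeral_2_eq_2)
lemma edgem: "p \<in> P \<Longrightarrow> p \<noteq> W (m-2) \<Longrightarrow> p \<noteq> W (m-1) \<Longrightarrow> ori (W (m-2)) (W (m-1)) p < 0"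
  using edge[of "m-2" p] m_facts by simp
lemma edgel: "p \<in> P \<Longrightarrow> p \<noteq> W (m-1) \<Longrightarrow> p \<noteq> W 0 \<Longrightarrow> ori (W (m-1)) (W 0) p < 0"
  using edge_last by simp

lemma edge_sep:
  assumes "\<And>z. z \<in> P \<Longrightarrow> z \<noteq> u \<Longrightarrow> z \<noteq> v \<Longrightarrow> ori u v z < 0"
    "p \<in> P" "q \<in> P" "p \<noteq> u" "p \<noteq> v" "q \<noteq> u" "q \<noteq> v"
  shows "closed_segment p q \<inter> closed_segment u v = {}"
  by (rule seg_sep'[of u v]) (use assms in auto)

lemma meet_signs:
  assumes "p \<in> P" "q \<in> P" "r1 \<in> P" "r2 \<in> P" "p \<noteq> q" "p \<noteq> r1" "p \<noteq> r2" "q \<noteq> r1" "q \<noteq> r2" "r1 \<noteq> r2"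
    "closed_segment p q \<inter> closed_segment r1 r2 \<noteq> {}"
  shows "ori r1 r2 p * ori r1 r2 q < 0"
proof (rule ccontr)
  assume "\<not> ori r1 r2 p * ori r1 r2 q < 0"
  moreover have "ori r1 r2 p \<noteq> 0" "ori r1 r2 q \<noteq> 0" using gp_ori assms by metis+
  ultimately have "(ori r1 r2 p > 0 \<and> ori r1 r2 q > 0) \<or> (ori r1 r2 p < 0 \<and> ori r1 r2 q < 0)"
    by (smt (verit) mult_neg_pos mult_pos_neg)
  then have "closed_segment p q \<inter> closed_segment r1 r2 = {}"
    using seg_sep[of r1 r2 p q r1 r2] seg_sep'[of r1 r2 p q r1 r2] by auto
  then show False using assms(11) by simp
qed

lemma G':
  assumes "p \<in> P" "q \<in> P" "p \<noteq> q"
    "closed_segment p q \<inter> closed_segment x (W 0) \<noteq> {}"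
    "closed_segment p q \<inter> closed_segment x (W 1) \<noteq> {}"
    "closed_segment p q \<inter> closed_segment (W 0) (W 1) \<noteq> {}"
    "{p, q} \<noteq> {x, W 0}" "{p, q} \<noteq> {x, W 1}" "{p, q} \<noteq> {W 0, W 1}"
  shows "{p, q} = {W 0, W 2} \<or> {p, q} = {W 0, W 3} \<or> {p, q} = {W 1, W (m-2)} \<or> {p, q} = {W 1, W (m-1)}"
proof -
  have "closed_segment p q \<in> segs P" unfolding segs_def using assms by blast
  from G[OF this] assms show ?thesis by simp
qed

lemma F1: "0 < ori (W 0) (W (m-2)) x"
proof (rule ccontr)
  assume "\<not> 0 < ori (W 0) (W (m-2)) x"
  moreover have "ori (W 0) (W (m-2)) x \<noteq> 0" using gp_ori inP dist' by metis
  ultimately have A: "ori (W 0) (W (m-2)) x < 0" by simp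
  note t1 = tri_all[of 0 "m-2" "m-1"] and t2 = tri_all[of 1 "m-2" "m-1"] and t3 = tri_all[of 0 1 "m-2"]
  have id: "ori (W (m-2)) (W (m-1)) (W 0) * ori (W 1) (W (m-2)) x =
     ori x (W (m-1)) (W 0) * ori (W 1) (W (m-2)) (W (m-2)) + ori (W (m-2)) x (W 0) * ori (W 1) (W (m-2)) (W (m-1))
     + ori (W (m-2)) (W (m-1)) x * ori (W 1) (W (m-2)) (W 0)"
    by (rule ori_bary)
  have e1: "ori (W (m-2)) x (W 0) < 0" using A ori_all[of "W 0" "W (m-2)" x] by linarith
  have e2: "ori (W (m-2)) (W (m-1)) x < 0" using edgem inP dist' by simp
  have "0 < ori x (W (m-1)) (W 0) * ori (W 1) (W (m-2)) (W (m-2)) + ori (W (m-2)) x (W 0) * ori (W 1) (W (m-2)) (W (m-1))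
     + ori (W (m-2)) x (W 0) * 0 + ori (W (m-2)) (W (m-1)) x * ori (W 1) (W (m-2)) (W 0)"
    using e1 e2 t2(1) t3(2) m_facts by (simp add: add_pos_pos mult_neg_neg)
  then have h: "ori (W 1) (W (m-2)) x < 0"
    using sgn_neg[of "ori (W 1) (W (m-2)) x" "ori (W (m-2)) (W (m-1)) (W 0)"] id t1(2) m_facts
    by (simp add: mult.commute)
  have "closed_segment (W 0) (W (m-2)) \<inter> closed_segment x (W 1) \<noteq> {}"
  proof (rule seg_cross)
    show "ori (W 0) (W (m-2)) x * ori (W 0) (W (m-2)) (W 1) < 0"
      using A t3(4) m_facts by (simp add: mult_neg_pos)
    have "ori (W 0) (W 1) x < 0" using edge01 inP dist' by simp
    then have "ori x (W 1) (W 0) > 0" using ori_all[of "W 0" x "W 1"] ori_all[of "W 0" "W 1" x] by linarith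
    moreover have "ori x (W 1) (W (m-2)) < 0" using h ori_all[of "W 1" "W (m-2)" x] by linarith
    ultimately show "ori x (W 1) (W 0) * ori x (W 1) (W (m-2)) < 0" by (simp add: mult_pos_neg)
  qed
  moreover have "closed_segment (W 0) (W (m-2)) \<inter> closed_segment x (W 0) \<noteq> {}" by auto
  moreover have "closed_segment (W 0) (W (m-2)) \<inter> closed_segment (W 0) (W 1) \<noteq> {}" by auto
  ultimately show False using G'[of "W 0" "W (m-2)"] inP dist' by (auto simp: doubleton_eq_iff)
qed

end

context cfg begin

lemma F2: "ori (W 1) (W 3) x < 0"
proof (rule ccontr)
  assume "\<not> ori (W 1) (W 3) x < 0"
  moreover have "ori (W 1) (W 3) x \<noteq> 0" using gp_ori inP dist' by metis
  ultimately have A: "ori (W 1) (W 3) x > 0" by simp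
  note t1 = tri_all[of 1 2 3] and t2 = tri_all[of 0 1 3] and t3 = tri_all[of 0 2 3]
  have id: "ori (W 1) (W 2) (W 3) * ori (W 0) (W 3) x =
     ori x (W 2) (W 3) * ori (W 0) (W 3) (W 1) + ori (W 1) x (W 3) * ori (W 0) (W 3) (W 2)
     + ori (W 1) (W 2) x * ori (W 0) (W 3) (W 3)"
    by (rule ori_bary)
  have e23: "ori (W 2) (W 3) x < 0" using edge23 inP dist' by simp
  have e1: "ori x (W 2) (W 3) < 0" using e23 ori_all[of "W 2" "W 3" x] by linarith
  have e2: "ori (W 1) x (W 3) < 0" using A ori_all[of "W 1" "W 3" x] by linarith
  have p1: "ori x (W 2) (W 3) * ori (W 0) (W 3) (W 1) < 0" using e1 t2(4) m_facts by (simp add: mult_neg_pos)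
  have p2: "ori (W 1) x (W 3) * ori (W 0) (W 3) (W 2) < 0" using e2 t3(4) m_facts by (simp add: mult_neg_pos)
  have h: "ori (W 0) (W 3) x > 0"
    using sgn_pos[of "ori (W 0) (W 3) x" "ori (W 1) (W 2) (W 3)"] id t1(1) m_facts p1 p2
    by (simp add: mult.commute)
  have "closed_segment (W 1) (W 3) \<inter> closed_segment x (W 0) \<noteq> {}"
  proof (rule seg_cross)
    have "ori (W 1) (W 3) (W 0) < 0" using t2(2) m_facts by simp
    then show "ori (W 1) (W 3) x * ori (W 1) (W 3) (W 0) < 0"
      using A by (simp add: mult_pos_neg)
    have "ori (W 0) (W 1) x < 0" using edge01 inP dist' by simp
    then have "ori x (W 0) (W 1) < 0" using ori_all[of "W 0" "W 1" x] by linarith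
    moreover have "ori x (W 0) (W 3) > 0" using h ori_all[of "W 0" "W 3" x] by linarith
    ultimately show "ori x (W 0) (W 1) * ori x (W 0) (W 3) < 0" by (simp add: mult_neg_pos)
  qed
  moreover have "closed_segment (W 1) (W 3) \<inter> closed_segment x (W 1) \<noteq> {}" by auto
  moreover have "closed_segment (W 1) (W 3) \<inter> closed_segment (W 0) (W 1) \<noteq> {}" by auto
  ultimately show False using G'[of "W 1" "W 3"] inP dist' by (auto simp: doubleton_eq_iff)
qed

lemma chord:
  assumes "k = m - 2 \<or> k = m - 1" "j = 2 \<or> j = 3"
  shows "0 < ori (W k) (W j) x"
proof -
  have km: "k < m" "j < m" "j < k" using assms m_facts by auto
  have "0 \<le> ori (W k) (W j) x"
  proof -
    have "0 \<le> ori (W k) (W j) (W 0)" using tri_all[of 0 j k] km assms by auto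
    moreover have "0 \<le> ori (W k) (W j) (W 1)" using tri_all[of 1 j k] km assms by auto
    moreover have "0 \<le> ori (W k) (W j) (W 2)" using tri_all[of 2 j k] km assms by (cases "j = 2") auto
    moreover have "0 \<le> ori (W k) (W j) (W (m-1))" using tri_all[of j k "m-1"] km assms m_facts by (cases "k = m - 1") auto
    ultimately show ?thesis using hull_ori[OF xhull, of "W k" "W j"] by auto
  qed
  moreover have "ori (W k) (W j) x \<noteq> 0"
    using gp_ori[of "W k" "W j" x] WP[of k] WP[of j] km xW[of k] xW[of j] xP Wne[of k j] by auto
  ultimately show ?thesis by simp
qed

end

context cfg begin

definition Rset where "Rset = {closed_segment x (W 0), closed_segment x (W 1), closed_segment (W 0) (W 1),
  closed_segment (W 0) (W 2), closed_segment (W 0) (W 3), closed_segment (W 1) (W (m-2)),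
  closed_segment (W 1) (W (m-1)), closed_segment (W 2) (W 3), closed_segment (W (m-2)) (W (m-1))}"

lemma use_e2:
  assumes "p1 \<in> P" "p2 \<in> P" "q1 \<in> P" "q2 \<in> P"
   "p1 \<noteq> W (m-2)" "p1 \<noteq> W (m-1)" "p2 \<noteq> W (m-2)" "p2 \<noteq> W (m-1)"
   "q1 \<noteq> W (m-2)" "q1 \<noteq> W (m-1)" "q2 \<noteq> W (m-2)" "q2 \<noteq> W (m-1)"
  shows "\<exists>r\<in>Rset. r \<inter> closed_segment p1 p2 = {} \<and> r \<inter> closed_segment q1 q2 = {}"
proof -
  have "closed_segment p1 p2 \<inter> closed_segment (W (m-2)) (W (m-1)) = {}"
    by (rule edge_sep) (use edgem assms in auto)
  moreover have "closed_segment q1 q2 \<inter> closed_segment (W (m-2)) (W (m-1)) = {}"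
    by (rule edge_sep) (use edgem assms in auto)
  ultimately show ?thesis unfolding Rset_def by blast
qed

lemma use_e1:
  assumes "p1 \<in> P" "p2 \<in> P" "q1 \<in> P" "q2 \<in> P"
   "p1 \<noteq> W 2" "p1 \<noteq> W 3" "p2 \<noteq> W 2" "p2 \<noteq> W 3"
   "q1 \<noteq> W 2" "q1 \<noteq> W 3" "q2 \<noteq> W 2" "q2 \<noteq> W 3"
  shows "\<exists>r\<in>Rset. r \<inter> closed_segment p1 p2 = {} \<and> r \<inter> closed_segment q1 q2 = {}"
proof -
  have "closed_segment p1 p2 \<inter> closed_segment (W 2) (W 3) = {}"
    by (rule edge_sep) (use edge23 assms in auto)
  moreover have "closed_segment q1 q2 \<inter> closed_segment (W 2) (W 3) = {}"
    by (rule edge_sep) (use edge23 assms in auto)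
  ultimately show ?thesis unfolding Rset_def by blast
qed

lemma use_c:
  assumes "p1 \<in> P" "p2 \<in> P" "q1 \<in> P" "q2 \<in> P"
   "p1 \<noteq> W 0" "p1 \<noteq> W 1" "p2 \<noteq> W 0" "p2 \<noteq> W 1"
   "q1 \<noteq> W 0" "q1 \<noteq> W 1" "q2 \<noteq> W 0" "q2 \<noteq> W 1"
  shows "\<exists>r\<in>Rset. r \<inter> closed_segment p1 p2 = {} \<and> r \<inter> closed_segment q1 q2 = {}"
proof -
  have "closed_segment p1 p2 \<inter> closed_segment (W 0) (W 1) = {}"
    by (rule edge_sep) (use edge01 assms in auto)
  moreover have "closed_segment q1 q2 \<inter> closed_segment (W 0) (W 1) = {}"
    by (rule edge_sep) (use edge01 assms in auto)
  ultimately show ?thesis unfolding Rset_def by blast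
qed

lemma half0_sub:
  assumes j: "j = 2 \<or> j = 3" and q: "q \<in> P" "q \<noteq> W j"
   and p2: "p2 \<in> P" "p2 \<noteq> W 0" "p2 \<noteq> W 1" "p2 \<noteq> x" "p2 \<noteq> W 2" "p2 \<noteq> W 3"
   and tR: "closed_segment (W j) q \<notin> Rset"
   and st: "closed_segment (W 0) p2 \<inter> closed_segment (W j) q \<noteq> {}"
   and tb: "closed_segment (W j) q \<inter> closed_segment x (W 1) \<noteq> {}"
  shows "\<exists>r\<in>Rset. r \<inter> closed_segment (W 0) p2 = {} \<and> r \<inter> closed_segment (W j) q = {}"
proof -
  have jm: "0 < j" "1 < j" "j < m" "j < m - 2" using j m_facts by auto
  have Wj: "W j \<in> P" "W j \<noteq> W 0" "W j \<noteq> W 1" "W j \<noteq> x" "W j \<noteq> W (m-2)" "W j \<noteq> W (m-1)"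
    using j inP dist' by auto
  consider "q = W 0" | "q = W 1" | "q = x" | "q = W (m-2) \<or> q = W (m-1)" | "q = W 2 \<or> q = W 3"
    | "q \<notin> {W 0, W 1, x, W 2, W 3, W (m-2), W (m-1)}" by blast
  then show ?thesis
  proof cases
    case 1
    then show ?thesis using tR j unfolding Rset_def by (auto simp: doubleton_eq_iff)
  next
    case 2
    consider "p2 \<noteq> W (m-2) \<and> p2 \<noteq> W (m-1)" | "p2 = W (m-1)" | "p2 = W (m-2)" by blast
    then show ?thesis
    proof cases
      case 1
      then show ?thesis using use_e2[of "W 0" p2 "W j" q] inP p2 Wj q dist' \<open>q = W 1\<close> by auto
    next
      case 2
      have "closed_segment (W j) q \<inter> closed_segment (W (m-1)) (W 0) = {}"
        by (rule edge_sep) (use edgel Wj \<open>q = W 1\<close> inP dist' in auto)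
      then show ?thesis using st \<open>p2 = W (m-1)\<close> by (auto simp: closed_segment_commute)
    next
      case 3
      have "closed_segment (W 0) p2 \<inter> closed_segment (W 1) (W j) = {}"
      proof (cases "j = 2")
        case True
        then show ?thesis using \<open>p2 = W (m-2)\<close>
          by (intro edge_sep) (use edge12 inP dist' in auto)
      next
        case False
        then have "j = 3" using j by simp
        have "ori (W 1) (W 3) (W 0) < 0" "ori (W 1) (W 3) (W (m-2)) < 0"
          using tri_all[of 0 1 3] tri_all[of 1 3 "m-2"] m_facts by auto
        then show ?thesis using \<open>j = 3\<close> \<open>p2 = W (m-2)\<close> seg_sep'[of "W 1" "W 3" "W 0" "W (m-2)" "W 1" "W 3"] by simp
      qed
      then show ?thesis using st \<open>q = W 1\<close> by (auto simp: closed_segment_commute)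
    qed
  next
    case 3
    consider "p2 \<noteq> W (m-2) \<and> p2 \<noteq> W (m-1)" | "p2 = W (m-1)" | "p2 = W (m-2)" by blast
    then show ?thesis
    proof cases
      case 1
      then show ?thesis using use_e2[of "W 0" p2 "W j" q] inP p2 Wj q dist' \<open>q = x\<close> by auto
    next
      case 2
      have "closed_segment (W j) q \<inter> closed_segment (W (m-1)) (W 0) = {}"
        by (rule edge_sep) (use edgel Wj \<open>q = x\<close> inP dist' in auto)
      then show ?thesis using st \<open>p2 = W (m-1)\<close> by (auto simp: closed_segment_commute)
    next
      case 3
      have "0 < ori (W 0) (W (m-2)) (W j)" using tri_all[of 0 j "m-2"] jm m_facts by auto
      then have "closed_segment (W j) x \<inter> closed_segment (W 0) (W (m-2)) = {}"
        using seg_sep[of "W 0" "W (m-2)" "W j" x "W 0" "W (m-2)"] F1 by simp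
      then show ?thesis using st \<open>p2 = W (m-2)\<close> \<open>q = x\<close> by auto
    qed
  next
    case 4
    then obtain k where k: "k = m - 2 \<or> k = m - 1" "q = W k" by blast
    have km: "k < m" "j < k" using k(1) jm m_facts by auto
    have "0 < ori (W k) (W j) (W 1)" using tri_all[of 1 j k] km jm by auto
    then have "closed_segment x (W 1) \<inter> closed_segment (W k) (W j) = {}"
      using seg_sep[of "W k" "W j" x "W 1" "W k" "W j"] chord[OF k(1) j] by simp
    then show ?thesis using tb k by (auto simp: closed_segment_commute)
  next
    case 5
    then show ?thesis using tR j q unfolding Rset_def by (auto simp: doubleton_eq_iff)
  next
    case 6
    then have qn: "q \<noteq> W 0" "q \<noteq> W 1" "q \<noteq> x" "q \<noteq> W 2" "q \<noteq> W 3" "q \<noteq> W (m-2)" "q \<noteq> W (m-1)" by auto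
    consider "p2 \<noteq> W (m-2) \<and> p2 \<noteq> W (m-1)" | "p2 = W (m-1)" | "p2 = W (m-2)" by blast
    then show ?thesis
    proof cases
      case 1
      then show ?thesis using use_e2[of "W 0" p2 "W j" q] inP p2 Wj q qn dist' by auto
    next
      case 2
      have "closed_segment (W j) q \<inter> closed_segment (W (m-1)) (W 0) = {}"
        by (rule edge_sep) (use edgel Wj qn q in auto)
      then show ?thesis using st \<open>p2 = W (m-1)\<close> by (auto simp: closed_segment_commute)
    next
      case 3
      let ?f = "ori (W 0) (W (m-2))"
      have fj: "0 < ?f (W j)" using tri_all[of 0 j "m-2"] jm m_facts by auto
      have f1: "0 < ?f (W 1)" "0 < ?f (W 2)" "0 < ?f (W 3)"
        using tri_all[of 0 1 "m-2"] tri_all[of 0 2 "m-2"] tri_all[of 0 3 "m-2"] m_facts by auto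
      have qneg: "?f q < 0"
      proof (rule ccontr)
        assume "\<not> ?f q < 0"
        moreover have "?f q \<noteq> 0" using gp_ori[of "W 0" "W (m-2)" q] inP q qn dist' by auto
        ultimately have "0 < ?f q" by simp
        then have "closed_segment (W j) q \<inter> closed_segment (W 0) (W (m-2)) = {}"
          using seg_sep[of "W 0" "W (m-2)" "W j" q "W 0" "W (m-2)"] fj by simp
        then show False using st \<open>p2 = W (m-2)\<close> by auto
      qed
      have W1q: "closed_segment (W 1) q \<inter> closed_segment x (W 0) = {}"
      proof (rule ccontr)
        assume "closed_segment (W 1) q \<inter> closed_segment x (W 0) \<noteq> {}"
        moreover have "closed_segment (W 1) q \<inter> closed_segment x (W 1) \<noteq> {}" by auto
        moreover have "closed_segment (W 1) q \<inter> closed_segment (W 0) (W 1) \<noteq> {}" by auto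
        ultimately show False using G'[of "W 1" q] inP q qn dist' by (auto simp: doubleton_eq_iff)
      qed
      have crs: "ori x (W 1) (W j) * ori x (W 1) q < 0"
        by (rule meet_signs) (use Wj q qn inP dist' tb in auto)
      have oq: "ori (W 1) x q \<noteq> 0" using gp_ori[of "W 1" x q] inP q qn dist' by auto
      have e01q: "ori (W 0) (W 1) q < 0" using edge01 q qn by simp
      have e01x: "ori (W 0) (W 1) x < 0" using edge01 inP dist' by simp
      have e12q: "ori (W 1) (W 2) q < 0" using edge12 q qn by simp
      have e12x: "ori (W 1) (W 2) x < 0" using edge12 inP dist' by simp
      show ?thesis
      proof (cases "ori (W 1) x q < 0")
        case True
        have xq: "0 < ori x (W 0) q"
        proof (rule ccontr)
          assume "\<not> 0 < ori x (W 0) q"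
          moreover have "ori x (W 0) q \<noteq> 0" using gp_ori[of x "W 0" q] inP q qn dist' by auto
          ultimately have neg: "ori x (W 0) q < 0" by simp
          have id: "ori x (W 0) (W 1) * ?f q = ori q (W 0) (W 1) * ?f x + ori x q (W 1) * ?f (W 0) + ori x (W 0) q * ?f (W 1)"
            by (rule ori_bary)
          have a1: "ori x (W 0) (W 1) < 0" using e01x ori_all[of "W 0" "W 1" x] by linarith
          have a2: "ori q (W 0) (W 1) * ?f x < 0"
            using e01q ori_all[of "W 0" "W 1" q] F1 by (simp add: mult_neg_pos)
          have a3: "ori x (W 0) q * ?f (W 1) < 0" using neg f1 by (simp add: mult_neg_pos)
          have "0 < ?f q" using sgn_pos[of "?f q" "ori x (W 0) (W 1)"] id a1 a2 a3 by (simp add: mult.commute)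
          then show False using qneg by simp
        qed
        have "closed_segment (W 1) q \<inter> closed_segment x (W 0) \<noteq> {}"
        proof (rule seg_cross)
          have "0 < ori (W 1) q x" using True ori_all[of "W 1" x q] by linarith
          moreover have "ori (W 1) q (W 0) < 0" using e01q ori_all[of "W 0" "W 1" q] by linarith
          ultimately show "ori (W 1) q x * ori (W 1) q (W 0) < 0" by (simp add: mult_pos_neg)
          have "ori x (W 0) (W 1) < 0" using e01x ori_all[of "W 0" "W 1" x] by linarith
          then show "ori x (W 0) (W 1) * ori x (W 0) q < 0" using xq by (simp add: mult_neg_pos)
        qed
        then show ?thesis using W1q by simp
      next
        case False
        then have pos: "0 < ori (W 1) x q" using oq by simp
        then have "ori x (W 1) q < 0" using ori_all[of "W 1" x q] by linarith
        then have "0 < ori x (W 1) (W j)" using crs by (simp add: mult_less_0_iff)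
        then have xj: "ori (W 1) x (W j) < 0" using ori_all[of "W 1" x "W j"] by linarith
        show ?thesis
        proof (cases "j = 2")
          case True
          then have "ori (W 1) x (W 2) < 0" using xj by simp
          then have False using e12x ori_all[of "W 1" "W 2" x] by linarith
          then show ?thesis by simp
        next
          case False
          then have j3: "j = 3" using j by simp
          have id: "ori (W 1) q (W 3) * ori (W 1) (W 2) x = ori (W 1) q x * ori (W 1) (W 2) (W 3) + ori (W 1) x (W 3) * ori (W 1) (W 2) q"
            by (rule ori_trans_id)
          have t123: "ori (W 1) (W 2) (W 3) < 0" using tri_all[of 1 2 3] m_facts by simp
          have b1: "0 < ori (W 1) q x * ori (W 1) (W 2) (W 3)"
            using pos ori_all[of "W 1" x q] t123 by (simp add: mult_neg_neg)
          have b2: "0 < ori (W 1) x (W 3) * ori (W 1) (W 2) q" using xj j3 e12q by (simp add: mult_neg_neg)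
          have q3: "ori (W 1) q (W 3) < 0" using sgn_neg[OF id e12x] b1 b2 by simp
          have id2: "ori (W 1) (W 2) (W 3) * ?f q = ori q (W 2) (W 3) * ?f (W 1) + ori (W 1) q (W 3) * ?f (W 2) + ori (W 1) (W 2) q * ?f (W 3)"
            by (rule ori_bary)
          have e23q: "ori (W 2) (W 3) q < 0" using edge23 q qn by simp
          have c1: "ori q (W 2) (W 3) * ?f (W 1) < 0" using e23q ori_all[of "W 2" "W 3" q] f1 by (simp add: mult_neg_pos)
          have c2: "ori (W 1) q (W 3) * ?f (W 2) < 0" using q3 f1 by (simp add: mult_neg_pos)
          have c3: "ori (W 1) (W 2) q * ?f (W 3) < 0" using e12q f1 by (simp add: mult_neg_pos)
          have "0 < ?f q" using sgn_pos[of "?f q" "ori (W 1) (W 2) (W 3)"] id2 t123 c1 c2 c3 by (simp add: mult.commute)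
          then show ?thesis using qneg by simp
        qed
      qed
    qed
  qed
qed

end

context cfg begin

lemma half1_sub:
  assumes k: "k = m - 2 \<or> k = m - 1" and q: "q \<in> P" "q \<noteq> W k"
   and p2: "p2 \<in> P" "p2 \<noteq> W 1" "p2 \<noteq> W 0" "p2 \<noteq> x" "p2 \<noteq> W (m-2)" "p2 \<noteq> W (m-1)"
   and tR: "closed_segment (W k) q \<notin> Rset"
   and st: "closed_segment (W 1) p2 \<inter> closed_segment (W k) q \<noteq> {}"
   and ta: "closed_segment (W k) q \<inter> closed_segment x (W 0) \<noteq> {}"
  shows "\<exists>r\<in>Rset. r \<inter> closed_segment (W 1) p2 = {} \<and> r \<inter> closed_segment (W k) q = {}"
proof -
  have km: "3 < k" "k < m" using k m_facts by auto
  have Wk: "W k \<in> P" "W k \<noteq> W 0" "W k \<noteq> W 1" "W k \<noteq> x" "W k \<noteq> W 2" "W k \<noteq> W 3"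
    using k inP dist' by auto
  consider "q = W 1" | "q = W 0" | "q = x" | "q = W 2 \<or> q = W 3" | "q = W (m-2) \<or> q = W (m-1)"
    | "q \<notin> {W 0, W 1, x, W 2, W 3, W (m-2), W (m-1)}" by blast
  then show ?thesis
  proof cases
    case 1
    then show ?thesis using tR k unfolding Rset_def by (auto simp: doubleton_eq_iff)
  next
    case 2
    consider "p2 \<noteq> W 2 \<and> p2 \<noteq> W 3" | "p2 = W 2" | "p2 = W 3" by blast
    then show ?thesis
    proof cases
      case 1
      then show ?thesis using use_e1[of "W 1" p2 "W k" q] inP p2 Wk q dist' \<open>q = W 0\<close> by auto
    next
      case 2
      have "closed_segment (W k) q \<inter> closed_segment (W 1) (W 2) = {}"
        by (rule edge_sep) (use edge12 Wk \<open>q = W 0\<close> inP dist' in auto)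
      then show ?thesis using st \<open>p2 = W 2\<close> by (auto simp: closed_segment_commute)
    next
      case 3
      have "closed_segment (W 1) (W 3) \<inter> closed_segment (W k) (W 0) = {}"
      proof (cases "k = m - 1")
        case True
        then show ?thesis
          by (intro edge_sep) (use edgel inP dist' in auto)
      next
        case False
        then have "k = m - 2" using k by simp
        have "0 < ori (W 0) (W (m-2)) (W 1)" "0 < ori (W 0) (W (m-2)) (W 3)"
          using tri_all[of 0 1 "m-2"] tri_all[of 0 3 "m-2"] m_facts by auto
        then have "closed_segment (W 1) (W 3) \<inter> closed_segment (W 0) (W (m-2)) = {}"
          using seg_sep[of "W 0" "W (m-2)" "W 1" "W 3" "W 0" "W (m-2)"] by simp
        then show ?thesis using \<open>k = m - 2\<close> by (simp add: closed_segment_commute)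
      qed
      then show ?thesis using st \<open>q = W 0\<close> \<open>p2 = W 3\<close> by auto
    qed
  next
    case 3
    consider "p2 \<noteq> W 2 \<and> p2 \<noteq> W 3" | "p2 = W 2" | "p2 = W 3" by blast
    then show ?thesis
    proof cases
      case 1
      then show ?thesis using use_e1[of "W 1" p2 "W k" q] inP p2 Wk q dist' \<open>q = x\<close> by auto
    next
      case 2
      have "closed_segment (W k) q \<inter> closed_segment (W 1) (W 2) = {}"
        by (rule edge_sep) (use edge12 Wk \<open>q = x\<close> inP dist' in auto)
      then show ?thesis using st \<open>p2 = W 2\<close> by (auto simp: closed_segment_commute)
    next
      case 3
      have "ori (W 1) (W 3) (W k) < 0" using tri_all[of 1 3 k] km by auto
      then have "closed_segment (W k) x \<inter> closed_segment (W 1) (W 3) = {}"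
        using seg_sep'[of "W 1" "W 3" "W k" x "W 1" "W 3"] F2 by simp
      then show ?thesis using st \<open>p2 = W 3\<close> \<open>q = x\<close> by auto
    qed
  next
    case 4
    then obtain j where j: "j = 2 \<or> j = 3" "q = W j" by blast
    have jm: "j < m" "1 < j" "j < k" using j km by auto
    have "0 < ori (W k) (W j) (W 0)" using tri_all[of 0 j k] km jm by auto
    then have "closed_segment x (W 0) \<inter> closed_segment (W k) (W j) = {}"
      using seg_sep[of "W k" "W j" x "W 0" "W k" "W j"] chord[OF k j(1)] by simp
    then show ?thesis using ta j by (auto simp: closed_segment_commute)
  next
    case 5
    then show ?thesis using tR k q unfolding Rset_def by (auto simp: doubleton_eq_iff)
  next
    case 6
    then have qn: "q \<noteq> W 0" "q \<noteq> W 1" "q \<noteq> x" "q \<noteq> W 2" "q \<noteq> W 3" "q \<noteq> W (m-2)" "q \<noteq> W (m-1)" by auto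
    consider "p2 \<noteq> W 2 \<and> p2 \<noteq> W 3" | "p2 = W 2" | "p2 = W 3" by blast
    then show ?thesis
    proof cases
      case 1
      then show ?thesis using use_e1[of "W 1" p2 "W k" q] inP p2 Wk q qn dist' by auto
    next
      case 2
      have "closed_segment (W k) q \<inter> closed_segment (W 1) (W 2) = {}"
        by (rule edge_sep) (use edge12 Wk qn q in auto)
      then show ?thesis using st \<open>p2 = W 2\<close> by (auto simp: closed_segment_commute)
    next
      case 3
      let ?g = "ori (W 1) (W 3)"
      have gk: "?g (W k) < 0" using tri_all[of 1 3 k] km by auto
      have g0: "?g (W 0) < 0" "?g (W (m-2)) < 0" "?g (W (m-1)) < 0"
        using tri_all[of 0 1 3] tri_all[of 1 3 "m-2"] tri_all[of 1 3 "m-1"] m_facts by auto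
      have qpos: "0 < ?g q"
      proof (rule ccontr)
        assume "\<not> 0 < ?g q"
        moreover have "?g q \<noteq> 0" using gp_ori[of "W 1" "W 3" q] inP q qn dist' by auto
        ultimately have "?g q < 0" by simp
        then have "closed_segment (W k) q \<inter> closed_segment (W 1) (W 3) = {}"
          using seg_sep'[of "W 1" "W 3" "W k" q "W 1" "W 3"] gk by simp
        then show False using st \<open>p2 = W 3\<close> by auto
      qed
      have W0q: "closed_segment (W 0) q \<inter> closed_segment x (W 1) = {}"
      proof (rule ccontr)
        assume "closed_segment (W 0) q \<inter> closed_segment x (W 1) \<noteq> {}"
        moreover have "closed_segment (W 0) q \<inter> closed_segment x (W 0) \<noteq> {}" by auto
        moreover have "closed_segment (W 0) q \<inter> closed_segment (W 0) (W 1) \<noteq> {}" by auto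
        ultimately show False using G'[of "W 0" q] inP q qn dist' by (auto simp: doubleton_eq_iff)
      qed
      have crs: "ori x (W 0) (W k) * ori x (W 0) q < 0"
        by (rule meet_signs) (use Wk q qn inP dist' ta in auto)
      have oq: "ori (W 0) x q \<noteq> 0" using gp_ori[of "W 0" x q] inP q qn dist' by auto
      have e01q: "ori (W 0) (W 1) q < 0" using edge01 q qn by simp
      have e01x: "ori (W 0) (W 1) x < 0" using edge01 inP dist' by simp
      show ?thesis
      proof (cases "0 < ori (W 0) x q")
        case True
        have xq: "ori x (W 1) q < 0"
        proof (rule ccontr)
          assume "\<not> ori x (W 1) q < 0"
          moreover have "ori x (W 1) q \<noteq> 0" using gp_ori[of x "W 1" q] inP q qn dist' by auto
          ultimately have pos: "0 < ori x (W 1) q" by simp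
          have id: "ori x (W 0) (W 1) * ?g q = ori q (W 0) (W 1) * ?g x + ori x q (W 1) * ?g (W 0) + ori x (W 0) q * ?g (W 1)"
            by (rule ori_bary)
          have a1: "ori x (W 0) (W 1) < 0" using e01x ori_all[of "W 0" "W 1" x] by linarith
          have "ori q (W 0) (W 1) < 0" using e01q ori_all[of "W 0" "W 1" q] by linarith
          then have a2: "0 < ori q (W 0) (W 1) * ?g x"
            using F2 by (rule mult_neg_neg)
          have "ori x q (W 1) < 0" using pos ori_all[of x "W 1" q] by linarith
          then have a3: "0 < ori x q (W 1) * ?g (W 0)"
            using g0(1) by (rule mult_neg_neg)
          have "?g q < 0" using sgn_neg[of "?g q" "ori x (W 0) (W 1)"] id a1 a2 a3 by (simp add: mult.commute)
          then show False using qpos by simp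
        qed
        have "closed_segment (W 0) q \<inter> closed_segment x (W 1) \<noteq> {}"
        proof (rule seg_cross)
          have "ori (W 0) q x < 0" using True ori_all[of "W 0" x q] by linarith
          moreover have "0 < ori (W 0) q (W 1)" using e01q ori_all[of "W 0" "W 1" q] by linarith
          ultimately show "ori (W 0) q x * ori (W 0) q (W 1) < 0" by (simp add: mult_neg_pos)
          have "0 < ori x (W 1) (W 0)" using e01x ori_all[of "W 0" "W 1" x] ori_all[of "W 0" x "W 1"] by linarith
          then show "ori x (W 1) (W 0) * ori x (W 1) q < 0" using xq by (simp add: mult_pos_neg)
        qed
        then show ?thesis using W0q by simp
      next
        case False
        then have neg: "ori (W 0) x q < 0" using oq by simp
        then have "0 < ori x (W 0) q" using ori_all[of "W 0" x q] by linarith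
        then have "ori x (W 0) (W k) < 0" using crs by (simp add: mult_less_0_iff)
        then have xk: "0 < ori (W 0) x (W k)" using ori_all[of "W 0" x "W k"] by linarith
        show ?thesis
        proof (cases "k = m - 1")
          case True
          have "ori (W (m-1)) (W 0) x < 0" using edgel inP dist' by simp
          then have False using xk True ori_all[of "W 0" x "W (m-1)"] by simp
          then show ?thesis by simp
        next
          case False
          then have k2: "k = m - 2" using k by simp
          have w: "0 < ori (W 0) (W (m-1)) z" if "z \<in> P" "z \<noteq> W 0" "z \<noteq> W (m-1)" for z
            using edgel[OF that(1,3,2)] ori_all[of "W (m-1)" "W 0" z] by linarith
          have wx: "0 < ori (W 0) (W (m-1)) x" using w inP dist' by simp
          have wq: "0 < ori (W 0) (W (m-1)) q" using w q qn by simp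
          have wm: "0 < ori (W 0) (W (m-1)) (W (m-2))" using w inP dist' by simp
          have id: "ori (W 0) q (W (m-2)) * ori (W 0) (W (m-1)) x = ori (W 0) q x * ori (W 0) (W (m-1)) (W (m-2)) + ori (W 0) x (W (m-2)) * ori (W 0) (W (m-1)) q"
            by (rule ori_trans_id)
          have "0 < ori (W 0) q x" using neg ori_all[of "W 0" x q] by linarith
          then have b1: "0 < ori (W 0) q x * ori (W 0) (W (m-1)) (W (m-2))"
            using wm by simp
          have b2: "0 < ori (W 0) x (W (m-2)) * ori (W 0) (W (m-1)) q" using xk k2 wq by simp
          have q2: "0 < ori (W 0) q (W (m-2))" using sgn_neg2[OF id wx] b1 b2 by simp
          have id2: "ori (W (m-2)) (W (m-1)) (W 0) * ?g q = ori q (W (m-1)) (W 0) * ?g (W (m-2)) + ori (W (m-2)) q (W 0) * ?g (W (m-1)) + ori (W (m-2)) (W (m-1)) q * ?g (W 0)"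
            by (rule ori_bary)
          have t: "ori (W (m-2)) (W (m-1)) (W 0) < 0" using tri_all[of 0 "m-2" "m-1"] m_facts by simp
          have elq: "ori (W (m-1)) (W 0) q < 0" using edgel q qn by simp
          have emq: "ori (W (m-2)) (W (m-1)) q < 0" using edgem q qn by simp
          have "ori q (W (m-1)) (W 0) < 0" using elq ori_all[of "W (m-1)" "W 0" q] by linarith
          then have c1: "0 < ori q (W (m-1)) (W 0) * ?g (W (m-2))"
            using g0(2) by (rule mult_neg_neg)
          have "ori (W (m-2)) q (W 0) < 0" using q2 ori_all[of "W 0" q "W (m-2)"] by linarith
          then have c2: "0 < ori (W (m-2)) q (W 0) * ?g (W (m-1))"
            using g0(3) by (rule mult_neg_neg)
          have c3: "0 < ori (W (m-2)) (W (m-1)) q * ?g (W 0)" using emq g0 by (simp add: mult_neg_neg)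
          have "?g q < 0" using sgn_neg[of "?g q" "ori (W (m-2)) (W (m-1)) (W 0)"] id2 t c1 c2 c3 by (simp add: mult.commute)
          then show ?thesis using qpos by simp
        qed
      qed
    qed
  qed
qed

end

context cfg begin

lemma Rmem: "closed_segment x (W 0) \<in> Rset" "closed_segment x (W 1) \<in> Rset" "closed_segment (W 0) (W 1) \<in> Rset"
  "closed_segment (W 0) (W 2) \<in> Rset" "closed_segment (W 0) (W 3) \<in> Rset" "closed_segment (W 1) (W (m-2)) \<in> Rset"
  "closed_segment (W 1) (W (m-1)) \<in> Rset" "closed_segment (W 2) (W 3) \<in> Rset" "closed_segment (W (m-2)) (W (m-1)) \<in> Rset"
  unfolding Rset_def by blast+

lemma half0:
  assumes p2: "p2 \<in> P" "p2 \<noteq> W 0" and q: "q1 \<in> P" "q2 \<in> P" "q1 \<noteq> q2"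
    and sR: "closed_segment (W 0) p2 \<notin> Rset" and tR: "closed_segment q1 q2 \<notin> Rset"
    and st: "closed_segment (W 0) p2 \<inter> closed_segment q1 q2 \<noteq> {}"
  shows "\<exists>r\<in>Rset. r \<inter> closed_segment (W 0) p2 = {} \<and> r \<inter> closed_segment q1 q2 = {}"
proof -
  have pn: "p2 \<noteq> W 1" "p2 \<noteq> x" "p2 \<noteq> W 2" "p2 \<noteq> W 3"
    using sR unfolding Rset_def by (auto simp: doubleton_eq_iff)
  have sb: "closed_segment (W 0) p2 \<inter> closed_segment x (W 1) = {}"
  proof (rule ccontr)
    assume "closed_segment (W 0) p2 \<inter> closed_segment x (W 1) \<noteq> {}"
    moreover have "closed_segment (W 0) p2 \<inter> closed_segment x (W 0) \<noteq> {}" by auto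
    moreover have "closed_segment (W 0) p2 \<inter> closed_segment (W 0) (W 1) \<noteq> {}" by auto
    ultimately show False using G'[of "W 0" p2] inP p2 pn dist' by (auto simp: doubleton_eq_iff)
  qed
  show ?thesis
  proof (cases "closed_segment q1 q2 \<inter> closed_segment x (W 1) = {}")
    case True
    show ?thesis
      by (rule bexI[OF _ Rmem(2)]) (use True sb in blast)
  next
    case tb: False
    consider "q1 \<noteq> W 2 \<and> q1 \<noteq> W 3 \<and> q2 \<noteq> W 2 \<and> q2 \<noteq> W 3" | "q1 = W 2 \<or> q1 = W 3" | "q2 = W 2 \<or> q2 = W 3"
      by blast
    then show ?thesis
    proof cases
      case 1
      then show ?thesis using use_e1[of "W 0" p2 q1 q2] inP p2 pn q dist' by simp
    next
      case 2
      then obtain j where j: "j = 2 \<or> j = 3" "q1 = W j" by blast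
      have "\<exists>r\<in>Rset. r \<inter> closed_segment (W 0) p2 = {} \<and> r \<inter> closed_segment (W j) q2 = {}"
        by (rule half0_sub[OF j(1)]) (use j q p2 pn tR st tb in simp_all)
      then show ?thesis using j(2) by simp
    next
      case 3
      then obtain j where j: "j = 2 \<or> j = 3" "q2 = W j" by blast
      have c: "closed_segment q1 q2 = closed_segment q2 q1" by (rule closed_segment_commute)
      have "\<exists>r\<in>Rset. r \<inter> closed_segment (W 0) p2 = {} \<and> r \<inter> closed_segment (W j) q1 = {}"
        by (rule half0_sub[OF j(1)]) (use j q p2 pn tR[unfolded c] st[unfolded c] tb[unfolded c] in simp_all)
      then show ?thesis unfolding c using j(2) by simp
    qed
  qed
qed

lemma half1:
  assumes p2: "p2 \<in> P" "p2 \<noteq> W 1" and q: "q1 \<in> P" "q2 \<in> P" "q1 \<noteq> q2"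
    and sR: "closed_segment (W 1) p2 \<notin> Rset" and tR: "closed_segment q1 q2 \<notin> Rset"
    and st: "closed_segment (W 1) p2 \<inter> closed_segment q1 q2 \<noteq> {}"
  shows "\<exists>r\<in>Rset. r \<inter> closed_segment (W 1) p2 = {} \<and> r \<inter> closed_segment q1 q2 = {}"
proof -
  have pn: "p2 \<noteq> W 0" "p2 \<noteq> x" "p2 \<noteq> W (m-2)" "p2 \<noteq> W (m-1)"
    using sR unfolding Rset_def by (auto simp: doubleton_eq_iff)
  have sa: "closed_segment (W 1) p2 \<inter> closed_segment x (W 0) = {}"
  proof (rule ccontr)
    assume "closed_segment (W 1) p2 \<inter> closed_segment x (W 0) \<noteq> {}"
    moreover have "closed_segment (W 1) p2 \<inter> closed_segment x (W 1) \<noteq> {}" by auto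
    moreover have "closed_segment (W 1) p2 \<inter> closed_segment (W 0) (W 1) \<noteq> {}" by auto
    ultimately show False using G'[of "W 1" p2] inP p2 pn dist' by (auto simp: doubleton_eq_iff)
  qed
  show ?thesis
  proof (cases "closed_segment q1 q2 \<inter> closed_segment x (W 0) = {}")
    case True
    show ?thesis
      by (rule bexI[OF _ Rmem(1)]) (use True sa in blast)
  next
    case ta: False
    consider "q1 \<noteq> W (m-2) \<and> q1 \<noteq> W (m-1) \<and> q2 \<noteq> W (m-2) \<and> q2 \<noteq> W (m-1)"
      | "q1 = W (m-2) \<or> q1 = W (m-1)" | "q2 = W (m-2) \<or> q2 = W (m-1)"
      by blast
    then show ?thesis
    proof cases
      case 1
      then show ?thesis using use_e2[of "W 1" p2 q1 q2] inP p2 pn q dist' by simp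
    next
      case 2
      then obtain k where k: "k = m - 2 \<or> k = m - 1" "q1 = W k" by blast
      have "\<exists>r\<in>Rset. r \<inter> closed_segment (W 1) p2 = {} \<and> r \<inter> closed_segment (W k) q2 = {}"
        by (rule half1_sub[OF k(1)]) (use k q p2 pn tR st ta in simp_all)
      then show ?thesis using k(2) by simp
    next
      case 3
      then obtain k where k: "k = m - 2 \<or> k = m - 1" "q2 = W k" by blast
      have c: "closed_segment q1 q2 = closed_segment q2 q1" by (rule closed_segment_commute)
      have "\<exists>r\<in>Rset. r \<inter> closed_segment (W 1) p2 = {} \<and> r \<inter> closed_segment (W k) q1 = {}"
        by (rule half1_sub[OF k(1)]) (use k q p2 pn tR[unfolded c] st[unfolded c] ta[unfolded c] in simp_all)
      then show ?thesis unfolding c using k(2) by simp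
    qed
  qed
qed

lemma half:
  assumes "p1 = W 0 \<or> p1 = W 1" "p2 \<in> P" "p1 \<noteq> p2" "q1 \<in> P" "q2 \<in> P" "q1 \<noteq> q2"
    "closed_segment p1 p2 \<notin> Rset" "closed_segment q1 q2 \<notin> Rset"
    "closed_segment p1 p2 \<inter> closed_segment q1 q2 \<noteq> {}"
  shows "\<exists>r\<in>Rset. r \<inter> closed_segment p1 p2 = {} \<and> r \<inter> closed_segment q1 q2 = {}"
proof (cases "p1 = W 0")
  case True
  show ?thesis unfolding True by (rule half0) (use assms True in simp_all)
next
  case False
  then have "p1 = W 1" using assms(1) by simp
  show ?thesis unfolding \<open>p1 = W 1\<close> by (rule half1) (use assms \<open>p1 = W 1\<close> in simp_all)
qed

lemma key:
  assumes "p1 \<in> P" "p2 \<in> P" "p1 \<noteq> p2" "q1 \<in> P" "q2 \<in> P" "q1 \<noteq> q2"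
    "closed_segment p1 p2 \<notin> Rset" "closed_segment q1 q2 \<notin> Rset"
    "closed_segment p1 p2 \<inter> closed_segment q1 q2 \<noteq> {}"
  shows "\<exists>r\<in>Rset. r \<inter> closed_segment p1 p2 = {} \<and> r \<inter> closed_segment q1 q2 = {}"
proof -
  have cp: "closed_segment p1 p2 = closed_segment p2 p1" by (rule closed_segment_commute)
  have cq: "closed_segment q1 q2 = closed_segment q2 q1" by (rule closed_segment_commute)
  have st': "closed_segment q1 q2 \<inter> closed_segment p1 p2 \<noteq> {}" using assms(9) by blast
  consider "p1 = W 0 \<or> p1 = W 1" | "p2 = W 0 \<or> p2 = W 1" | "q1 = W 0 \<or> q1 = W 1" | "q2 = W 0 \<or> q2 = W 1"
    | "p1 \<noteq> W 0 \<and> p1 \<noteq> W 1 \<and> p2 \<noteq> W 0 \<and> p2 \<noteq> W 1 \<and> q1 \<noteq> W 0 \<and> q1 \<noteq> W 1 \<and> q2 \<noteq> W 0 \<and> q2 \<noteq> W 1"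
    by blast
  then show ?thesis
  proof cases
    case 1
    show ?thesis by (rule half) (use assms 1 in simp_all)
  next
    case 2
    show ?thesis unfolding cp by (rule half) (use assms[unfolded cp] 2 in simp_all)
  next
    case 3
    have "\<exists>r\<in>Rset. r \<inter> closed_segment q1 q2 = {} \<and> r \<inter> closed_segment p1 p2 = {}"
      by (rule half) (use assms 3 st' in simp_all)
    then show ?thesis by blast
  next
    case 4
    have "\<exists>r\<in>Rset. r \<inter> closed_segment q2 q1 = {} \<and> r \<inter> closed_segment p1 p2 = {}"
      by (rule half) (use assms[unfolded cq] 4 st'[unfolded cq] in simp_all)
    then show ?thesis unfolding cq by blast
  next
    case 5
    then show ?thesis using use_c[of p1 p2 q1 q2] assms by simp
  qed
qed

end

lemma walk_len2:
  assumes "is_walk V E ys a b" "a \<noteq> b" shows "2 \<le> length ys"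
proof -
  have "ys \<noteq> []" "hd ys = a" "last ys = b" using assms(1) unfolding is_walk_def by auto
  then show ?thesis using assms(2)
    by (cases ys; cases "tl ys") auto
qed

lemma walk_len3:
  assumes "is_walk V E ys a b" "a \<noteq> b" "\<not> E a b" shows "3 \<le> length ys"
proof -
  have w: "ys \<noteq> []" "hd ys = a" "last ys = b" "\<forall>i. Suc i < length ys \<longrightarrow> E (ys ! i) (ys ! Suc i)"
    using assms(1) unfolding is_walk_def by auto
  have "length ys \<noteq> 2"
  proof
    assume "length ys = 2"
    then obtain u v where "ys = [u, v]"
      by (metis (no_types, lifting) One_nat_def Suc_1 length_0_conv length_Suc_conv)
    then show False using w assms(3) by auto
  qed
  then show ?thesis using walk_len2[OF assms(1,2)] by simp
qed

lemma mv_disj: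
  assumes "s \<in> V" "t \<in> V" "s \<noteq> t" "E s t"
  shows "mutually_visible V E U s t"
proof -
  have e: "\<forall>i. Suc i < length [s, t] \<longrightarrow> E ([s, t] ! i) ([s, t] ! Suc i)"
  proof (intro allI impI)
    fix i assume "Suc i < length [s, t]"
    then have "i = 0" by simp
    then show "E ([s, t] ! i) ([s, t] ! Suc i)" using assms(4) by simp
  qed
  have w: "is_walk V E [s, t] s t" unfolding is_walk_def
  proof (intro conjI)
    show "[s, t] \<noteq> []" by simp
    show "hd [s, t] = s" by simp
    show "last [s, t] = t" by simp
    show "set [s, t] \<subseteq> V" using assms by simp
    show "\<forall>i. Suc i < length [s, t] \<longrightarrow> E ([s, t] ! i) ([s, t] ! Suc i)" by (rule e)
  qed
  have sp: "\<forall>ys. is_walk V E ys s t \<longrightarrow> length [s, t] \<le> length ys"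
  proof (intro allI impI)
    fix ys assume h: "is_walk V E ys s t"
    have "2 \<le> length ys" using h assms(3) by (rule walk_len2)
    then show "length [s, t] \<le> length ys" by simp
  qed
  have "is_shortest_path V E [s, t] s t" unfolding is_shortest_path_def by (intro conjI w sp)
  moreover have "\<forall>i. 0 < i \<and> Suc i < length [s, t] \<longrightarrow> [s, t] ! i \<notin> U" by simp
  ultimately show ?thesis unfolding mutually_visible_def by (intro exI[of _ "[s, t]"] conjI)
qed

lemma mv_via:
  assumes "s \<in> V" "t \<in> V" "r \<in> V" "s \<noteq> t" "\<not> E s t" "E s r" "E r t" "r \<notin> U"
  shows "mutually_visible V E U s t"
proof -
  have e: "\<forall>i. Suc i < length [s, r, t] \<longrightarrow> E ([s, r, t] ! i) ([s, r, t] ! Suc i)"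
  proof (intro allI impI)
    fix i assume "Suc i < length [s, r, t]"
    then have "i = 0 \<or> i = 1" by auto
    then show "E ([s, r, t] ! i) ([s, r, t] ! Suc i)" using assms(6,7) by auto
  qed
  have w: "is_walk V E [s, r, t] s t" unfolding is_walk_def
  proof (intro conjI)
    show "[s, r, t] \<noteq> []" by simp
    show "hd [s, r, t] = s" by simp
    show "last [s, r, t] = t" by simp
    show "set [s, r, t] \<subseteq> V" using assms by simp
    show "\<forall>i. Suc i < length [s, r, t] \<longrightarrow> E ([s, r, t] ! i) ([s, r, t] ! Suc i)" by (rule e)
  qed
  have sp: "\<forall>ys. is_walk V E ys s t \<longrightarrow> length [s, r, t] \<le> length ys"
  proof (intro allI impI)
    fix ys assume h: "is_walk V E ys s t"
    have "3 \<le> length ys" using h assms(4,5) by (rule walk_len3)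
    then show "length [s, r, t] \<le> length ys" by simp
  qed
  have "is_shortest_path V E [s, r, t] s t" unfolding is_shortest_path_def by (intro conjI w sp)
  moreover have "\<forall>i. 0 < i \<and> Suc i < length [s, r, t] \<longrightarrow> [s, r, t] ! i \<notin> U"
  proof (intro allI impI)
    fix i assume "0 < i \<and> Suc i < length [s, r, t]"
    then have "i = 1" by auto
    then show "[s, r, t] ! i \<notin> U" using assms(8) by simp
  qed
  ultimately show ?thesis unfolding mutually_visible_def by (intro exI[of _ "[s, r, t]"] conjI)
qed

lemma card2E:
  assumes "card S = 2" obtains a b where "S = {a, b}" "a \<noteq> b"
  using assms card_2_iff by metis

lemma card_segs:
  assumes "finite P"
  shows "finite (segs P)" "card (segs P) = card P choose 2"
proof -
  let ?F = "{S. S \<subseteq> P \<and> card S = 2}"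
  have eq: "segs P = (\<lambda>S. convex hull S) ` ?F"
  proof
    show "segs P \<subseteq> (\<lambda>S. convex hull S) ` ?F"
    proof
      fix s assume "s \<in> segs P"
      then obtain a b where ab: "s = closed_segment a b" "a \<in> P" "b \<in> P" "a \<noteq> b" unfolding segs_def by blast
      have "s = convex hull {a, b}" using ab(1) by (simp only: segment_convex_hull)
      moreover have "card {a, b} = 2" using ab(4) by simp
      moreover have "{a, b} \<subseteq> P" using ab(2,3) by simp
      ultimately show "s \<in> (\<lambda>S. convex hull S) ` ?F" by blast
    qed
    show "(\<lambda>S. convex hull S) ` ?F \<subseteq> segs P"
    proof
      fix s assume "s \<in> (\<lambda>S. convex hull S) ` ?F"
      then obtain S where S: "s = convex hull S" "S \<subseteq> P" "card S = 2" by blast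
      then obtain a b where ab: "S = {a, b}" "a \<noteq> b" by (blast elim: card2E)
      then have "s = closed_segment a b" using S(1) by (simp only: segment_convex_hull)
      moreover have "a \<in> P" "b \<in> P" using S(2) ab(1) by auto
      ultimately show "s \<in> segs P" unfolding segs_def using ab(2) by blast
    qed
  qed
  have inj: "inj_on (\<lambda>S. convex hull S) ?F"
  proof (rule inj_onI)
    fix S T assume S: "S \<in> ?F" and T: "T \<in> ?F" and e: "convex hull S = convex hull T"
    obtain a b where ab: "S = {a, b}" using S by (blast elim: card2E)
    obtain c d where cd: "T = {c, d}" using T by (blast elim: card2E)
    have "closed_segment a b = closed_segment c d" using e unfolding ab cd by (simp only: segment_convex_hull)
    then show "S = T" unfolding ab cd by (simp only: closed_segment_eq)
  qed
  have fin: "finite ?F" by (rule finite_subset[of _ "Pow P"]) (use assms in auto)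
  show "finite (segs P)" unfolding eq using fin by (rule finite_imageI)
  show "card (segs P) = card P choose 2" unfolding eq card_image[OF inj] n_subsets[OF assms] ..
qed

context cfg begin

lemma seg_in: "a \<in> P \<Longrightarrow> b \<in> P \<Longrightarrow> a \<noteq> b \<Longrightarrow> closed_segment a b \<in> segs P"
  unfolding segs_def by blast

lemma Rset_sub: "Rset \<subseteq> segs P"
  unfolding Rset_def
  by (intro insert_subsetI empty_subsetI seg_in; (rule inP dist')?)

lemma card_R: "card Rset \<le> 9"
proof -
  define L where "L = [closed_segment x (W 0), closed_segment x (W 1), closed_segment (W 0) (W 1),
    closed_segment (W 0) (W 2), closed_segment (W 0) (W 3), closed_segment (W 1) (W (m-2)),
    closed_segment (W 1) (W (m-1)), closed_segment (W 2) (W 3), closed_segment (W (m-2)) (W (m-1))]"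
  have l: "length L = 9" unfolding L_def by simp
  have e: "Rset = set L" unfolding L_def Rset_def by (simp only: list.set)
  have "card (set L) \<le> 9" using card_length[of L] l by linarith
  then show ?thesis unfolding e .
qed

lemma mv: "mv_set (segs P) D_adj (segs P - Rset)"
  unfolding mv_set_def
proof (intro conjI ballI impI)
  show "segs P - Rset \<subseteq> segs P" by blast
  fix s t assume s: "s \<in> segs P - Rset" and t: "t \<in> segs P - Rset" and st: "s \<noteq> t"
  have sP: "s \<in> segs P" "s \<notin> Rset" using s by blast+
  have tP: "t \<in> segs P" "t \<notin> Rset" using t by blast+
  show "mutually_visible (segs P) D_adj (segs P - Rset) s t"
  proof (cases "s \<inter> t = {}")
    case True
    then have "D_adj s t" unfolding D_adj_def .
    then show ?thesis using sP(1) tP(1) st by (rule mv_disj[rotated 3])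
  next
    case False
    obtain p1 p2 where p: "s = closed_segment p1 p2" "p1 \<in> P" "p2 \<in> P" "p1 \<noteq> p2" using sP(1) unfolding segs_def by blast
    obtain q1 q2 where q: "t = closed_segment q1 q2" "q1 \<in> P" "q2 \<in> P" "q1 \<noteq> q2" using tP(1) unfolding segs_def by blast
    have s1: "closed_segment p1 p2 \<notin> Rset" using sP(2) unfolding p(1) .
    have t1: "closed_segment q1 q2 \<notin> Rset" using tP(2) unfolding q(1) .
    have st1: "closed_segment p1 p2 \<inter> closed_segment q1 q2 \<noteq> {}" using False unfolding p(1) q(1) .
    obtain r where r: "r \<in> Rset" "r \<inter> closed_segment p1 p2 = {}" "r \<inter> closed_segment q1 q2 = {}"
      using key[OF p(2-4) q(2-4) s1 t1 st1] by blast
    have rs: "r \<inter> s = {}" "r \<inter> t = {}" using r(2,3) unfolding p(1) q(1) by blast+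
    show ?thesis
    proof (rule mv_via[of s _ t r])
      show "r \<in> segs P" using r(1) Rset_sub by blast
      show "s \<in> segs P" by (rule sP(1))
      show "t \<in> segs P" by (rule tP(1))
      show "s \<noteq> t" by (rule st)
      show "\<not> D_adj s t" unfolding D_adj_def using False .
      show "D_adj s r" unfolding D_adj_def using rs(1) by blast
      show "D_adj r t" unfolding D_adj_def using rs(2) .
      show "r \<notin> segs P - Rset" using r(1) by blast
    qed
  qed
qed

end

lemma mod_inj_aux:
  fixes a b i m :: nat
  assumes "a < m" "b < m" "(a + i) mod m = (b + i) mod m"
  shows "a = b"
proof (rule ccontr)
  assume ne: "a \<noteq> b"
  have "int ((a + i) mod m) = int ((b + i) mod m)" using assms(3) by simp
  then have "(int a + int i) mod int m = (int b + int i) mod int m" by (simp add: zmod_int)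
  then have "int m dvd (int a + int i) - (int b + int i)" by (simp add: mod_eq_dvd_iff)
  then have d: "int m dvd (int a - int b)" by simp
  have "int a - int b \<noteq> 0" using ne by simp
  then have "\<bar>int m\<bar> \<le> \<bar>int a - int b\<bar>" using d by (rule dvd_imp_le_int)
  then show False using assms(1,2) by linarith
qed

theorem proposition12:
  fixes P :: "pt set" and n m :: nat
  assumes "finite P" and "card P = n"
    and "general_position P"
    and "m = card (hull_pts P)" and "m \<ge> 6"
    and "has_good_triangle P"
  shows "mu (segs P) D_adj \<ge> (n choose 2) - 9"
proof -
  obtain v x i where enum: "clockwise_hull_enum P m v" and gt: "good_triangle P m v x i"
    using assms(4,6) unfolding has_good_triangle_def by blast
  have m0: "0 < m" using assms(5) by simp
  have bij: "bij_betw v {..<m} (hull_pts P)" and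
    ed: "\<And>j p. j < m \<Longrightarrow> p \<in> P \<Longrightarrow> p \<noteq> v j \<Longrightarrow> p \<noteq> v (Suc j mod m) \<Longrightarrow>
        cross (v (Suc j mod m) - v j) (p - v j) < 0"
    using enum unfolding clockwise_hull_enum_def by blast+
  have hP: "hull_pts P \<subseteq> P" unfolding hull_pts_def by blast
  have vh: "v j \<in> hull_pts P" if "j < m" for j using bij that by (auto dest: bij_betwE)
  define W where "W k = v ((k + i) mod m)" for k
  have Wh: "W k \<in> hull_pts P" for k unfolding W_def using vh m0 by simp
  have wq: "v (i mod m) = W 0" "v ((i + 1) mod m) = W 1" "v ((i + 2) mod m) = W 2"
    "v ((i + 3) mod m) = W 3" "v ((i + m - 2) mod m) = W (m - 2)" "v ((i + m - 1) mod m) = W (m - 1)"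
  proof -
    have e1: "i + m - 2 = m - 2 + i" "i + m - 1 = m - 1 + i" using assms(5) by auto
    show "v (i mod m) = W 0" "v ((i + 1) mod m) = W 1" "v ((i + 2) mod m) = W 2"
      "v ((i + 3) mod m) = W 3" "v ((i + m - 2) mod m) = W (m - 2)" "v ((i + m - 1) mod m) = W (m - 1)"
      unfolding W_def e1 by (simp_all add: add.commute)
  qed
  note g = gt[unfolded good_triangle_def Let_def wq]
  have gt'1: "x \<in> P" using g by (elim conjE)
  have gt'2: "x \<notin> hull_pts P" using g by (elim conjE)
  have gt'3: "x \<in> interior (convex hull {W 0, W 1, W 2, W (m - 1)})" using g by (elim conjE)
  have gt'4: "\<forall>s\<in>segs P. s \<notin> {closed_segment x (W 0), closed_segment x (W 1), closed_segment (W 0) (W 1)} \<and>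
          s \<inter> closed_segment x (W 0) \<noteq> {} \<and>
          s \<inter> closed_segment x (W 1) \<noteq> {} \<and>
          s \<inter> closed_segment (W 0) (W 1) \<noteq> {} \<longrightarrow>
          s \<in> {closed_segment (W 0) (W 2), closed_segment (W 0) (W 3),
                closed_segment (W 1) (W (m - 2)), closed_segment (W 1) (W (m - 1))}" using g by (elim conjE)
  interpret cfg P m W x
  proof
    show "general_position P" by (rule assms(3))
    show "6 \<le> m" by (rule assms(5))
    show "W k \<in> P" if "k < m" for k using Wh hP by blast
    show "a = b" if "a < m" "b < m" "W a = W b" for a b
    proof -
      have inj: "inj_on v {..<m}" using bij by (rule bij_betw_imp_inj_on)
      have "(a + i) mod m = (b + i) mod m"
        using inj_onD[OF inj that(3)[unfolded W_def]] m0 by simp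
      then show ?thesis using mod_inj_aux that(1,2) by blast
    qed
    show "ori (W k) (W (Suc k)) p < 0" if "Suc k < m" "p \<in> P" "p \<noteq> W k" "p \<noteq> W (Suc k)" for k p
    proof -
      let ?j = "(k + i) mod m"
      have s: "Suc ?j mod m = (Suc k + i) mod m" by (simp add: mod_Suc_eq)
      have "cross (v (Suc ?j mod m) - v ?j) (p - v ?j) < 0"
        using ed[of ?j p] that m0 unfolding s W_def by simp
      then show ?thesis unfolding ori_def s W_def .
    qed
    show "ori (W (m - 1)) (W 0) p < 0" if "p \<in> P" "p \<noteq> W (m - 1)" "p \<noteq> W 0" for p
    proof -
      let ?j = "(m - 1 + i) mod m"
      have s: "Suc ?j mod m = (0 + i) mod m"
      proof -
        have "Suc ?j mod m = Suc (m - 1 + i) mod m" by (simp add: mod_Suc_eq)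
        also have "Suc (m - 1 + i) = m + i" using m0 by simp
        finally show ?thesis by simp
      qed
      have "cross (v (Suc ?j mod m) - v ?j) (p - v ?j) < 0"
        using ed[of ?j p] that m0 unfolding s W_def by simp
      then show ?thesis unfolding ori_def s W_def .
    qed
    show "x \<in> P" by (rule gt'1)
    show "x \<noteq> W k" if "k < m" for k using gt'2 Wh by blast
    show "x \<in> convex hull {W 0, W 1, W 2, W (m - 1)}" using gt'3 interior_subset by blast
    show "s \<in> {closed_segment (W 0) (W 2), closed_segment (W 0) (W 3),
                closed_segment (W 1) (W (m - 2)), closed_segment (W 1) (W (m - 1))}"
      if "s \<in> segs P" "s \<notin> {closed_segment x (W 0), closed_segment x (W 1), closed_segment (W 0) (W 1)}"
        "s \<inter> closed_segment x (W 0) \<noteq> {}" "s \<inter> closed_segment x (W 1) \<noteq> {}"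
        "s \<inter> closed_segment (W 0) (W 1) \<noteq> {}" for s
      using gt'4 that by blast
  qed
  have fs: "finite (segs P)" using card_segs(1)[OF assms(1)] .
  have cs: "card (segs P) = n choose 2" using card_segs(2)[OF assms(1)] assms(2) by simp
  have "card (segs P) - card Rset \<le> card (segs P - Rset)"
    by (rule diff_card_le_card_Diff) (rule finite_subset[OF Rset_sub fs])
  then have c1: "(n choose 2) - 9 \<le> card (segs P - Rset)" using card_R cs by linarith
  have fin: "finite {card U | U. mv_set (segs P) D_adj U}"
  proof (rule finite_subset[of _ "card ` Pow (segs P)"])
    show "{card U | U. mv_set (segs P) D_adj U} \<subseteq> card ` Pow (segs P)"
    proof
      fix k assume "k \<in> {card U | U. mv_set (segs P) D_adj U}"
      then obtain U where U: "k = card U" "mv_set (segs P) D_adj U" by blast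
      have "U \<subseteq> segs P" using U(2) unfolding mv_set_def by (rule conjunct1)
      then show "k \<in> card ` Pow (segs P)" using U(1) by blast
    qed
    show "finite (card ` Pow (segs P))" using fs by simp
  qed
  have "card (segs P - Rset) \<in> {card U | U. mv_set (segs P) D_adj U}"
    using mv by (intro CollectI exI[of _ "segs P - Rset"] conjI refl)
  then have "card (segs P - Rset) \<le> mu (segs P) D_adj"
    unfolding mu_def using fin by (rule Max_ge[rotated])
  then show ?thesis using c1 by linarith
qed

end
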